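(* Let $n\in\mathbb{C}\setminus\{0,-\tfrac12,-1\}$ and put $N_4=n+\tfrac12$. For $\lambda,\mu,\lambda',\mu'\in\mathbb{C}$ set $\delta=\mu-\lambda$, $\gamma^{1/2}=\sqrt3(\lambda+\mu-\tfrac12)$, $\gamma=(\gamma^{1/2})^2$, and similarly $\delta',\gamma'$ from $(\lambda',\mu')$. Define $f_0(\gamma,\delta)=(\delta-N_4+\tfrac12)(\delta-N_4-\tfrac12)\,\gamma^{1/2}$ and $f_1(\gamma,\delta)=(\delta-N_4)\bigl(\gamma-3N_4\delta-\tfrac34\bigr)$. (i) $\mathrm{SQ}^{\delta-n,0,4}_{\lambda,\mu}\cong\mathrm{SQ}^{\delta'-n,0,4}_{\lambda',\mu'}$ if and only if $f_0(\gamma,\delta)$ and $f_0(\gamma',\delta')$ are either both zero or both nonzero. The equivalence class where $f_0$ vanishes is that of $\mathcal{F}_n\oplus\mathcal{F}^\Pi_{n+1/2}\oplus\mathcal{F}_{n+1}\oplus\mathcal{F}^\Pi_{n+3/2}$. (ii) $\mathrm{SQ}^{\delta-n,1,4}_{\lambda,\mu}\cong\mathrm{SQ}^{\delta'-n,1,4}_{\lambda',\mu'}$ if and only if $f_1(\gamma,\delta)$ and $f_1(\gamma',\delta')$ are either both zero or both nonzero. The equivalence class where $f_1$ vanishes is that of $\mathcal{F}^\Pi_n\oplus\mathcal{F}_{n+1/2}\oplus\mathcal{F}^\Pi_{n+1}\oplus\mathcal{F}_{n+3/2}$. (iii) $\mathrm{SQ}^{\delta-n,0,4}_{\lambda,\mu}\cong\mathrm{SQ}^{\delta'-n,1,4}_{\lambda',\mu'}$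 if and only if $f_0(\gamma,\delta)$ and $f_1(\gamma',\delta')$ are either both zero or both nonzero.
   Context: Work over $\mathbb{C}$ on the superline $\mathbb{R}^{1|1}$ in the polynomial category. Let $\mathbb{C}[x,\xi]$ be the polynomial superalgebra with even coordinate $x$ and odd coordinate $\xi$ ($\xi^2=0$), $D=\partial_\xi+\xi\partial_x$, $\bar D=\partial_\xi-\xi\partial_x$. For $F\in\mathbb{C}[x,\xi]$ put $X_F=F\partial_x+\tfrac12 D(F)\bar D$; $\mathcal{K}=\{X_F\}$ is the Lie superalgebra of contact vector fields. For a superspace $V$, $V^\Pi$ is $V$ with parity reversed and $V^{p\Pi}$ is $V$ for $p$ even, $V^\Pi$ for $p$ odd. For $\nu\in\mathbb{C}$, $\mathcal{F}_\nu=\alpha^\nu\mathbb{C}[x,\xi]$ ($\alpha^\nu$ formal, even) with action $L_\nu(X_F)(\alpha^\nu G)=\alpha^\nu(X_F(G)+\nu\,\partial_x(F)\,G)$. For $z\in\mathbb{C}$ let $\bar D^z_0=e^{i\pi z/2}\partial_x^{z/2}$ (even), $\bar D^z_1=e^{i\pi(z-1)/2}\partial_x^{(z-1)/2}\bar D$ (odd). For $\lambda,\mu,k\in\mathbb{C}$, $p\in\mathbb{Z}_2$, $\delta=\mu-\lambda$: $\Psi^{k,p}_{\lambda,\mu}=\{\alpha^{\delta}\sum_{j\in\mathbb{N}}T_{2k-j}\bar D^{2k-j}_{p+(j\bmod 2)}:T_{2k-j}\in\mathbb{C}[x,\xi]\}$ (formal series), with composition defined by $\bar D^{z'}_{p'}\circ\bar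 D^z_p=\bar D^{z+z'}_{p+p'}$, $[\bar D,\partial_x^z]=0$, $\partial_x^z\circ F=\sum_{j}\binom{z}{j}\partial_x^j(F)\circ\partial_x^{z-j}$, and $\mathcal{K}$-action $L_{\lambda,\mu}(X)(T)=L_\mu(X)\circ T-(-1)^{|X||T|}T\circ L_\lambda(X)$. For $l\in\mathbb{Z}^+$, $\mathrm{SQ}^{k,p,l}_{\lambda,\mu}=\Psi^{k,p}_{\lambda,\mu}/\Psi^{k-l/2,\,p+l}_{\lambda,\mu}$, a $\mathcal{K}$-module with composition factors $\mathcal{F}^{p\Pi}_{\delta-k},\mathcal{F}^{(p+1)\Pi}_{\delta-k+1/2},\dots,\mathcal{F}^{(p+l-1)\Pi}_{\delta-k+(l-1)/2}$. Here $\cong$ denotes $\mathcal{K}$-equivalence (of any parity). *)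

theory Defs
  imports Complex_Main "HOL-Computational_Algebra.Polynomial"
begin

text \<open>A superfunction a + xi b (a, b in C[x]) is represented by the pair (a, b).\<close>
type_synonym sf = "complex poly \<times> complex poly"

definition sf_add :: "sf \<Rightarrow> sf \<Rightarrow> sf" where
  "sf_add F G = (fst F + fst G, snd F + snd G)"

definition sf_scale :: "complex \<Rightarrow> sf \<Rightarrow> sf" where
  "sf_scale c F = (smult c (fst F), smult c (snd F))"

definition sf_neg :: "sf \<Rightarrow> sf" where
  "sf_neg F = sf_scale (-1) F"

text \<open>(a + xi b)(c + xi d) = ac + xi (ad + bc), since xi^2 = 0.\<close>
definition sf_mult :: "sf \<Rightarrow> sf \<Rightarrow> sf" where
  "sf_mult F G = (fst F * fst G, fst F * snd G + snd F * fst G)"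

definition sf_zero :: sf where "sf_zero = (0, 0)"

definition sf_dx :: "sf \<Rightarrow> sf" where
  "sf_dx F = (pderiv (fst F), pderiv (snd F))"

text \<open>D = partial_xi + xi partial_x, Dbar = partial_xi - xi partial_x\<close>
definition sf_D :: "sf \<Rightarrow> sf" where
  "sf_D F = (snd F, pderiv (fst F))"

definition sf_Dbar :: "sf \<Rightarrow> sf" where
  "sf_Dbar F = (snd F, - pderiv (fst F))"

definition sf_sigma :: "sf \<Rightarrow> sf" where
  "sf_sigma F = (fst F, - snd F)"

definition sf_part :: "nat \<Rightarrow> sf \<Rightarrow> sf" where
  "sf_part q F = (if even q then (fst F, 0) else (0, snd F))"

definition sf_hom :: "nat \<Rightarrow> sf \<Rightarrow> bool" where
  "sf_hom q F \<longleftrightarrow> (if even q then snd F = 0 else fst F = 0)"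

definition Ldens :: "complex \<Rightarrow> sf \<Rightarrow> sf \<Rightarrow> sf" where
  "Ldens nu F G = sf_add (sf_add (sf_mult F (sf_dx G))
                      (sf_scale (1/2) (sf_mult (sf_D F) (sf_Dbar G))))
                      (sf_scale nu (sf_mult (sf_dx F) G))"

text \<open>A symbol of leading order a and parity index q is a sequence A :: nat => sf,
  standing for sum_j A j Dbar^(a-j)_(q+j).
  cbar z s G m is the coefficient c_m in
  Dbar^z_s o G = sum_m c_m Dbar^(z-m)_(s+m).\<close>
definition cbar :: "complex \<Rightarrow> nat \<Rightarrow> sf \<Rightarrow> nat \<Rightarrow> sf" where
  "cbar z s G m =
    (let t = m div 2 in
     if even s then
       (if even m then sf_scale ((z/2 gchoose t) * (-1)^t) ((sf_dx ^^ t) G) else sf_zero)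
     else
       (if even m then sf_scale (((z-1)/2 gchoose t) * (-1)^t) ((sf_dx ^^ t) (sf_sigma G))
        else sf_scale (((z-1)/2 gchoose t) * (-1)^t) ((sf_dx ^^ t) (sf_Dbar G))))"

text \<open>Composition (sum_i A i Dbar^(a-i)_(q+i)) o (sum_l B l Dbar^(b-l)_(r+l)); the result
  has leading order a+b and parity index q+r; this is its n-th coefficient.\<close>
definition sym_comp :: "complex \<Rightarrow> nat \<Rightarrow> (nat \<Rightarrow> sf) \<Rightarrow> complex \<Rightarrow> (nat \<Rightarrow> sf) \<Rightarrow> nat \<Rightarrow> sf" where
  "sym_comp a q A b B n =
     foldr sf_add
       (concat (map (\<lambda>i. map (\<lambda>m. sf_mult (A i) (cbar (a - of_nat i) (q + i) (B (n - i - m)) m))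
                        [0..<Suc (n - i)]) [0..<Suc n])) sf_zero"

text \<open>Symbol of L_nu(X_F) = F partial_x + 1/2 D(F) Dbar + nu F' as a symbol of order 2,
  parity index 0 (partial_x = - Dbar^2_0, Dbar = Dbar^1_1, 1 = Dbar^0_0).\<close>
definition Lsym :: "complex \<Rightarrow> sf \<Rightarrow> nat \<Rightarrow> sf" where
  "Lsym nu F j = (if j = 0 then sf_neg F
                  else if j = 1 then sf_scale (1/2) (sf_D F)
                  else if j = 2 then sf_scale nu (sf_dx F)
                  else sf_zero)"

type_synonym vec = "nat \<Rightarrow> sf"

definition V4 :: "vec set" where
  "V4 = {v. \<forall>j\<ge>4. v j = sf_zero}"

text \<open>A module is given by a parity shift eps (component j of an element of parity r
  has parity r + eps j) and an action of the contact field X_F (F in C[x,xi]).\<close>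
type_synonym kmod = "(nat \<Rightarrow> nat) \<times> (sf \<Rightarrow> vec \<Rightarrow> vec)"

definition vec_hom :: "(nat \<Rightarrow> nat) \<Rightarrow> nat \<Rightarrow> vec \<Rightarrow> bool" where
  "vec_hom eps r v \<longleftrightarrow> (\<forall>j. sf_hom (r + eps j) (v j))"

text \<open>Raw action on SQ for F and T homogeneous; s = 1 iff both are odd (sign).
  L_mu(X) o T - (-1)^(|X||T|) T o L_lambda(X) has order 2k+2, its first two coefficients
  vanish; the remaining ones are the coefficients of an element of Psi^{k,p}.\<close>
definition SQraw :: "complex \<Rightarrow> complex \<Rightarrow> complex \<Rightarrow> nat \<Rightarrow> sf \<Rightarrow> vec \<Rightarrow> nat \<Rightarrow> vec" where
  "SQraw lam mu k p F T s =
    (\<lambda>j. if j < 4 then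
          sf_add (sym_comp 2 0 (Lsym mu F) (2*k) T (j+2))
                 (sf_scale (- ((-1)^s)) (sym_comp (2*k) p T 2 (Lsym lam F) (j+2)))
         else sf_zero)"

definition vadd :: "vec \<Rightarrow> vec \<Rightarrow> vec" where
  "vadd u v = (\<lambda>j. sf_add (u j) (v j))"

definition vscale :: "complex \<Rightarrow> vec \<Rightarrow> vec" where
  "vscale c v = (\<lambda>j. sf_scale c (v j))"

text \<open>Action of K on SQ^{k,p,4}_{lambda,mu} = Psi^{k,p}/Psi^{k-2,p}, with elements
  represented by (T_{2k}, T_{2k-1}, T_{2k-2}, T_{2k-3}); extended linearly from
  homogeneous parts.\<close>
definition SQact :: "complex \<Rightarrow> complex \<Rightarrow> complex \<Rightarrow> nat \<Rightarrow> sf \<Rightarrow> vec \<Rightarrow> vec" where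
  "SQact lam mu k p F T =
    (let F0 = sf_part 0 F; F1 = sf_part 1 F;
         Te = (\<lambda>j. if j < 4 then sf_part (p + j) (T j) else sf_zero);
         To = (\<lambda>j. if j < 4 then sf_part (p + j + 1) (T j) else sf_zero)
     in vadd (vadd (SQraw lam mu k p F0 Te 0) (SQraw lam mu k p F0 To 0))
             (vadd (SQraw lam mu k p F1 Te 0) (SQraw lam mu k p F1 To 1)))"

text \<open>SQ^{k,p,4}_{lambda,mu}: j-th component carries F^{(p+j)Pi}_{delta-k+j/2}.\<close>
definition SQ4 :: "complex \<Rightarrow> complex \<Rightarrow> complex \<Rightarrow> nat \<Rightarrow> kmod" where
  "SQ4 lam mu k p = ((\<lambda>j. (p + j) mod 2), SQact lam mu k p)"

definition Dsum4 :: "(nat \<Rightarrow> complex) \<Rightarrow> (nat \<Rightarrow> nat) \<Rightarrow> kmod" where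
  "Dsum4 nu eps = (eps, (\<lambda>F v j. if j < 4 then Ldens (nu j) F (v j) else sf_zero))"

definition kequiv :: "kmod \<Rightarrow> kmod \<Rightarrow> bool" where
  "kequiv M M' \<longleftrightarrow>
    (\<exists>\<phi> s. bij_betw \<phi> V4 V4
       \<and> (\<forall>u\<in>V4. \<forall>v\<in>V4. \<phi> (vadd u v) = vadd (\<phi> u) (\<phi> v))
       \<and> (\<forall>c. \<forall>v\<in>V4. \<phi> (vscale c v) = vscale c (\<phi> v))
       \<and> (\<forall>r. \<forall>v\<in>V4. vec_hom (fst M) r v \<longrightarrow> vec_hom (fst M') (r + s) (\<phi> v))
       \<and> (\<forall>F. \<forall>v\<in>V4. \<phi> (snd M F v) = snd M' F (\<phi> v)))"

definition gamma_half :: "complex \<Rightarrow> complex \<Rightarrow> complex" where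
  "gamma_half lam mu = complex_of_real (sqrt 3) * (lam + mu - 1/2)"

definition gamma :: "complex \<Rightarrow> complex \<Rightarrow> complex" where
  "gamma lam mu = (gamma_half lam mu)^2"

definition N4 :: "complex \<Rightarrow> complex" where
  "N4 n = n + 1/2"

definition f0 :: "complex \<Rightarrow> complex \<Rightarrow> complex \<Rightarrow> complex" where
  "f0 n lam mu = (let d = mu - lam in (d - N4 n + 1/2) * (d - N4 n - 1/2) * gamma_half lam mu)"

definition f1 :: "complex \<Rightarrow> complex \<Rightarrow> complex \<Rightarrow> complex" where
  "f1 n lam mu = (let d = mu - lam in (d - N4 n) * (gamma lam mu - 3 * N4 n * d - 3/4))"

end

theory Submission
  imports Defs
begin


definition c1 :: "sf \<Rightarrow> sf \<Rightarrow> sf" where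
  "c1 F A = (fst A * pderiv (snd F), fst A * pderiv (pderiv (fst F)) - snd A * pderiv (snd F))"
definition c2 :: "sf \<Rightarrow> sf \<Rightarrow> sf" where
  "c2 F A = (fst A * pderiv (pderiv (fst F)), fst A * pderiv (pderiv (snd F)) + snd A * pderiv (pderiv (fst F)))"
definition c3 :: "sf \<Rightarrow> sf \<Rightarrow> sf" where
  "c3 F A = (fst A * pderiv (pderiv (snd F)), fst A * pderiv (pderiv (pderiv (fst F))) - snd A * pderiv (pderiv (snd F)))"

definition Mact :: "complex \<Rightarrow> complex \<Rightarrow> complex \<Rightarrow> complex \<Rightarrow> complex \<Rightarrow> sf \<Rightarrow> vec \<Rightarrow> vec" where
"Mact n A B C X F v = (\<lambda>j. if j = 0 then Ldens n F (v 0)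
 else if j = 1 then sf_add (Ldens (n+1/2) F (v 1)) (sf_scale A (c1 F (v 0)))
 else if j = 2 then sf_add (Ldens (n+1) F (v 2)) (sf_add (sf_scale B (c1 F (v 1))) (sf_scale (2*A*B) (c2 F (v 0))))
 else if j = 3 then sf_add (Ldens (n+3/2) F (v 3)) (sf_add (sf_scale C (c1 F (v 2))) (sf_add (sf_scale (2*B*C) (c2 F (v 1))) (sf_scale X (c3 F (v 0)))))
 else sf_zero)"

lemmas sfdefs = sf_add_def sf_scale_def sf_neg_def sf_mult_def sf_zero_def sf_dx_def sf_D_def sf_Dbar_def sf_sigma_def sf_part_def
  c1_def c2_def c3_def Ldens_def

lemmas pexp = pderiv_add pderiv_diff pderiv_minus pderiv_smult pderiv_mult


lemma gch2: "(a::complex) gchoose 2 = a*(a-1)/2"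
  by (simp add: gbinomial_prod_rev numeral_2_eq_2)
lemma dx2: "(f ^^ 2) G = f (f G)" by (simp add: numeral_2_eq_2)
lemma gch1: "(a::complex) gchoose 1 = a" by simp

lemma upts: "[0..<1] = [0]" "[0..<2] = [0,1]" "[0..<3] = [0,1,2]" "[0..<4] = [0,1,2,3]"
  "[0..<5] = [0,1,2,3,4]" "[0..<6] = [0,1,2,3,4,5]"
  by (simp_all add: upt_rec)

lemma SQ0_comp:
  fixes lam mu n :: complex
  assumes "j < 4"
  shows "SQact lam mu (mu-lam-n) 0 F T j = Mact n ((mu-lam-n)/2) (-(n+1-mu-lam)/2) ((mu-lam-n-1)/2)
           (-(mu-lam-n)*(mu-lam-n-1)/4) F T j"
proof -
  have "j = 0 \<or> j = 1 \<or> j = 2 \<or> j = 3" using assms by auto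
  then show ?thesis
  apply (elim disjE)
  apply (simp_all add: SQact_def SQraw_def Let_def vadd_def sym_comp_def cbar_def Lsym_def Mact_def gch2 dx2 upts)
  apply (simp_all add: sfdefs prod_eq_iff pexp)
  apply (simp_all add: poly_eq_poly_eq_iff[symmetric] fun_eq_iff)
  apply (simp_all add: field_simps)
  done
qed
lemma SQ1_comp:
  fixes lam mu n :: complex
  assumes "j < 4"
  shows "SQact lam mu (mu-lam-n) 1 F T j = Mact n ((mu+lam-n-1/2)/2) ((mu-lam-n-1/2)/2) ((mu+lam-n-3/2)/2)
           (-3/16 - n/2 - n^2/4 + mu/2 + mu*n/2 - mu^2/4 + lam*n/2 - lam*mu/2 + 3*lam^2/4) F T j"
proof -
  have "j = 0 \<or> j = 1 \<or> j = 2 \<or> j = 3" using assms by auto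
  then show ?thesis
  apply (elim disjE)
  apply (simp_all add: SQact_def SQraw_def Let_def vadd_def sym_comp_def cbar_def Lsym_def Mact_def gch2 dx2 upts)
  apply (simp_all add: sfdefs prod_eq_iff pexp)
  apply (simp_all add: poly_eq_poly_eq_iff[symmetric] fun_eq_iff)
  apply (simp_all add: field_simps power2_eq_square)
  done
qed

definition op1 :: "complex \<Rightarrow> sf \<Rightarrow> sf" where "op1 h A = (smult h (snd A), smult h (pderiv (fst A)))"
definition op2 :: "complex \<Rightarrow> sf \<Rightarrow> sf" where "op2 h A = (smult h (pderiv (fst A)), smult h (pderiv (snd A)))"
definition op3 :: "complex \<Rightarrow> sf \<Rightarrow> sf" where "op3 h A = (smult h (pderiv (snd A)), smult h (pderiv (pderiv (fst A))))"

definition Phi :: "complex \<Rightarrow> complex \<Rightarrow> complex \<Rightarrow> complex \<Rightarrow> vec \<Rightarrow> vec" where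
"Phi n a b c v = (\<lambda>j. if j = 0 then v 0
  else if j = 1 then sf_add (v 1) (op1 a (v 0))
  else if j = 2 then sf_add (v 2) (sf_add (op1 b (v 1)) (op2 ((2*n+1)*a*b) (v 0)))
  else if j = 3 then sf_add (v 3) (sf_add (op1 c (v 2)) (sf_add (op2 (2*(n+1)*b*c) (v 1))
                        (op3 (2*(n+1)*a*b*c) (v 0))))
  else sf_zero)"

lemma Phi_inter:
  shows "Phi n a b c (Mact n 0 0 0 (X - 2*n*(n+1)*a*b*c) F v) j = Mact n (n*a) ((n+1/2)*b) ((n+1)*c) X F (Phi n a b c v) j"
proof -
  consider "j = 0" | "j = 1" | "j = 2" | "j = 3" | "j \<ge> 4" by linarith
  then show ?thesis
  apply cases
  apply (simp_all add: Phi_def Mact_def op1_def op2_def op3_def)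
  apply (simp_all add: sfdefs prod_eq_iff pexp)
  apply (simp_all add: poly_eq_poly_eq_iff[symmetric] fun_eq_iff)
  apply (simp_all add: field_simps)
  done
qed


lemma sf_hom_cong: "even q = even q' \<Longrightarrow> sf_hom q X = sf_hom q' X"
  by (simp add: sf_hom_def)

lemma sf_hom_SS[simp]: "sf_hom (Suc (Suc q)) X = sf_hom q X"
  by (simp add: sf_hom_def)

lemma hom_op1: "sf_hom q A \<Longrightarrow> sf_hom (Suc q) (op1 h A)"
  by (auto simp: sf_hom_def op1_def split: if_splits)
lemma hom_op2: "sf_hom q A \<Longrightarrow> sf_hom q (op2 h A)"
  by (auto simp: sf_hom_def op2_def split: if_splits)
lemma hom_op3: "sf_hom q A \<Longrightarrow> sf_hom (Suc q) (op3 h A)"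
  by (auto simp: sf_hom_def op3_def split: if_splits)
lemma hom_add: "sf_hom q A \<Longrightarrow> sf_hom q B \<Longrightarrow> sf_hom q (sf_add A B)"
  by (auto simp: sf_hom_def sf_add_def split: if_splits)
lemma hom_zero: "sf_hom q sf_zero"
  by (auto simp: sf_hom_def sf_zero_def)


lemma hom_shift: "sf_hom q X \<Longrightarrow> even q = even q' \<Longrightarrow> sf_hom q' X"
  by (simp add: sf_hom_def)

lemma Phi_hom:
  assumes e: "\<And>j. e j = (p + j) mod 2" and h: "vec_hom e r v"
  shows "vec_hom e r (Phi n a b c v)"
  unfolding vec_hom_def
proof
  fix j
  have hj: "sf_hom (r + (p + j) mod 2) (v j)" for j using h e unfolding vec_hom_def by metis
  have h0: "sf_hom (r + p) (v 0)" using hom_shift[OF hj[of 0]] by (simp add: even_add)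
  have h1: "sf_hom (Suc (r + p)) (v 1)" using hom_shift[OF hj[of 1]] by (simp add: even_add)
  have h2: "sf_hom (r + p) (v 2)" using hom_shift[OF hj[of 2]] by (simp add: even_add)
  have h3: "sf_hom (Suc (r + p)) (v 3)" using hom_shift[OF hj[of 3]] by (simp add: even_add)
  have "sf_hom (r + (p + j) mod 2) (Phi n a b c v j)"
  proof -
    consider "j = 0" | "j = 1" | "j = 2" | "j = 3" | "j \<ge> 4" by linarith
    then show ?thesis
    proof cases
      case 1
      have "sf_hom (r + p) (Phi n a b c v j)" using 1 h0 by (simp add: Phi_def)
      then show ?thesis by (rule hom_shift) (use 1 in \<open>simp add: even_add\<close>)
    next
      case 2
      have "sf_hom (Suc (r + p)) (Phi n a b c v j)" using 2 h0 h1
        by (simp add: Phi_def hom_add hom_op1)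
      then show ?thesis by (rule hom_shift) (use 2 in \<open>simp add: even_add\<close>)
    next
      case 3
      have A: "sf_hom (r + p) (op1 b (v 1))" using hom_op1[OF h1] by simp
      have B: "sf_hom (r + p) (op2 ((2*n+1)*a*b) (v 0))" using h0 by (rule hom_op2)
      have "sf_hom (r + p) (Phi n a b c v j)" using 3 h2 A B
        by (simp add: Phi_def hom_add)
      then show ?thesis by (rule hom_shift) (use 3 in \<open>simp add: even_add\<close>)
    next
      case 4
      have A: "sf_hom (Suc (r + p)) (op2 (2*(n+1)*b*c) (v 1))" using h1 by (rule hom_op2)
      have B: "sf_hom (Suc (r + p)) (op3 (2*(n+1)*a*b*c) (v 0))" using h0 by (rule hom_op3)
      have C: "sf_hom (Suc (r + p)) (op1 c (v 2))" using h2 by (rule hom_op1)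
      have "sf_hom (Suc (r + p)) (Phi n a b c v j)" using 4 h3 A B C
        by (simp add: Phi_def hom_add)
      then show ?thesis by (rule hom_shift) (use 4 in \<open>simp add: even_add\<close>)
    next
      case 5 then show ?thesis by (simp add: Phi_def hom_zero)
    qed
  qed
  then show "sf_hom (r + e j) (Phi n a b c v j)" using e by simp
qed

definition sf_sub :: "sf \<Rightarrow> sf \<Rightarrow> sf" where "sf_sub X Y = (fst X - fst Y, snd X - snd Y)"
lemma sf_add_sub[simp]: "sf_add (sf_sub X Y) Y = X" by (simp add: sf_add_def sf_sub_def)
lemma sf_sub_add[simp]: "sf_sub (sf_add X Y) Y = X" by (simp add: sf_add_def sf_sub_def)

definition PhiInv :: "complex \<Rightarrow> complex \<Rightarrow> complex \<Rightarrow> complex \<Rightarrow> vec \<Rightarrow> vec" where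
"PhiInv n a b c w = (let v0 = w 0; v1 = sf_sub (w 1) (op1 a v0);
   v2 = sf_sub (w 2) (sf_add (op1 b v1) (op2 ((2*n+1)*a*b) v0));
   v3 = sf_sub (w 3) (sf_add (op1 c v2) (sf_add (op2 (2*(n+1)*b*c) v1) (op3 (2*(n+1)*a*b*c) v0)))
   in (\<lambda>j. if j = 0 then v0 else if j = 1 then v1 else if j = 2 then v2 else if j = 3 then v3 else sf_zero))"

lemma V4_iff: "v \<in> V4 \<longleftrightarrow> (\<forall>j\<ge>4. v j = sf_zero)" by (simp add: V4_def)

lemma Phi_V4: "Phi n a b c v \<in> V4" by (simp add: V4_def Phi_def)
lemma PhiInv_V4: "PhiInv n a b c v \<in> V4" by (simp add: V4_def PhiInv_def Let_def)

lemma Phi_PhiInv: "w \<in> V4 \<Longrightarrow> Phi n a b c (PhiInv n a b c w) = w"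
  by (rule ext) (simp add: Phi_def PhiInv_def Let_def V4_def)
lemma PhiInv_Phi: "w \<in> V4 \<Longrightarrow> PhiInv n a b c (Phi n a b c w) = w"
  by (rule ext) (simp add: Phi_def PhiInv_def Let_def V4_def)

lemma Phi_bij: "bij_betw (Phi n a b c) V4 V4"
  by (rule bij_betw_byWitness[where f'="PhiInv n a b c"])
     (auto simp: Phi_PhiInv PhiInv_Phi Phi_V4 PhiInv_V4)

lemma Phi_add: "Phi n a b c (vadd u v) = vadd (Phi n a b c u) (Phi n a b c v)"
  by (rule ext) (simp add: Phi_def vadd_def sfdefs op1_def op2_def op3_def prod_eq_iff pexp algebra_simps smult_add_right)

lemma Phi_scale: "Phi n a b c (vscale t v) = vscale t (Phi n a b c v)"
  by (rule ext) (simp add: Phi_def vscale_def sfdefs op1_def op2_def op3_def prod_eq_iff pexp algebra_simps smult_add_right)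

lemma vadd_V4: "u \<in> V4 \<Longrightarrow> v \<in> V4 \<Longrightarrow> vadd u v \<in> V4"
  by (simp add: V4_def vadd_def sf_add_def sf_zero_def)
lemma vscale_V4: "v \<in> V4 \<Longrightarrow> vscale c v \<in> V4"
  by (simp add: V4_def vscale_def sf_scale_def sf_zero_def)

lemma kequiv_trans:
  assumes "kequiv M1 M2" "kequiv M2 M3"
  shows "kequiv M1 M3"
proof -
  obtain f s where f: "bij_betw f V4 V4"
       "\<forall>u\<in>V4. \<forall>v\<in>V4. f (vadd u v) = vadd (f u) (f v)"
       "\<forall>c. \<forall>v\<in>V4. f (vscale c v) = vscale c (f v)"
       "\<forall>r. \<forall>v\<in>V4. vec_hom (fst M1) r v \<longrightarrow> vec_hom (fst M2) (r + s) (f v)"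
       "\<forall>F. \<forall>v\<in>V4. f (snd M1 F v) = snd M2 F (f v)"
    using assms(1) unfolding kequiv_def by blast
  obtain g t where g: "bij_betw g V4 V4"
       "\<forall>u\<in>V4. \<forall>v\<in>V4. g (vadd u v) = vadd (g u) (g v)"
       "\<forall>c. \<forall>v\<in>V4. g (vscale c v) = vscale c (g v)"
       "\<forall>r. \<forall>v\<in>V4. vec_hom (fst M2) r v \<longrightarrow> vec_hom (fst M3) (r + t) (g v)"
       "\<forall>F. \<forall>v\<in>V4. g (snd M2 F v) = snd M3 F (g v)"
    using assms(2) unfolding kequiv_def by blast
  have fV: "f v \<in> V4" if "v \<in> V4" for v using f(1) that bij_betwE by blast
  show ?thesis unfolding kequiv_def
  proof (intro exI[of _ "g \<circ> f"] exI[of _ "s + t"] conjI)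
    show "bij_betw (g \<circ> f) V4 V4" using f(1) g(1) by (rule bij_betw_trans)
    show "\<forall>u\<in>V4. \<forall>v\<in>V4. (g \<circ> f) (vadd u v) = vadd ((g \<circ> f) u) ((g \<circ> f) v)"
      using f(2) g(2) fV by simp
    show "\<forall>c. \<forall>v\<in>V4. (g \<circ> f) (vscale c v) = vscale c ((g \<circ> f) v)"
      using f(3) g(3) fV by simp
    show "\<forall>r. \<forall>v\<in>V4. vec_hom (fst M1) r v \<longrightarrow> vec_hom (fst M3) (r + (s + t)) ((g \<circ> f) v)"
      proof (intro allI ballI impI)
      fix r v assume "v \<in> V4" "vec_hom (fst M1) r v"
      then have "vec_hom (fst M2) (r + s) (f v)" using f(4) by blast
      then have "vec_hom (fst M3) (r + s + t) (g (f v))" using g(4) fV[OF \<open>v \<in> V4\<close>] by blast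
      then show "vec_hom (fst M3) (r + (s + t)) ((g \<circ> f) v)" by (simp add: add.assoc)
    qed
    show "\<forall>F. \<forall>v\<in>V4. (g \<circ> f) (snd M1 F v) = snd M3 F ((g \<circ> f) v)"
      using f(5) g(5) fV by simp
  qed
qed

lemma hom_parts: "sf_hom q X \<Longrightarrow> sf_hom (Suc q) X \<Longrightarrow> X = sf_zero"
  by (cases X) (auto simp: sf_hom_def sf_zero_def split: if_splits)

lemma hom_add_cancel: "sf_hom q (sf_add X Y) \<Longrightarrow> sf_hom q X \<Longrightarrow> sf_hom q Y"
  by (auto simp: sf_hom_def sf_add_def split: if_splits)

lemma hom_part: "sf_hom q (sf_part q X)"
  by (simp add: sf_hom_def sf_part_def)

lemma parts_add: "sf_add (sf_part q X) (sf_part (Suc q) X) = X"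
  by (simp add: sf_add_def sf_part_def)

definition zvec :: vec where "zvec = (\<lambda>j. sf_zero)"
lemma zvec_V4: "zvec \<in> V4" by (simp add: V4_def zvec_def)
lemma vscale0: "v \<in> V4 \<Longrightarrow> vscale 0 v = zvec"
  by (rule ext) (simp add: vscale_def zvec_def sf_scale_def sf_zero_def)

lemma kequiv_sym:
  assumes "kequiv M1 M2" and cl: "\<And>F v. v \<in> V4 \<Longrightarrow> snd M1 F v \<in> V4"
  shows "kequiv M2 M1"
proof -
  obtain f s where f: "bij_betw f V4 V4"
       "\<forall>u\<in>V4. \<forall>v\<in>V4. f (vadd u v) = vadd (f u) (f v)"
       "\<forall>c. \<forall>v\<in>V4. f (vscale c v) = vscale c (f v)"
       "\<forall>r. \<forall>v\<in>V4. vec_hom (fst M1) r v \<longrightarrow> vec_hom (fst M2) (r + s) (f v)"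
       "\<forall>F. \<forall>v\<in>V4. f (snd M1 F v) = snd M2 F (f v)"
    using assms(1) unfolding kequiv_def by blast
  define g where "g = inv_into V4 f"
  have gb: "bij_betw g V4 V4" using f(1) unfolding g_def by (rule bij_betw_inv_into)
  have gV: "g w \<in> V4" if "w \<in> V4" for w using gb that bij_betwE by blast
  have fg: "f (g w) = w" if "w \<in> V4" for w
    using f(1) that unfolding g_def by (metis bij_betw_def f_inv_into_f)
  have gf: "g (f v) = v" if "v \<in> V4" for v
    using f(1) that unfolding g_def by (meson bij_betw_inv_into_left)
  have fV: "f v \<in> V4" if "v \<in> V4" for v using f(1) that bij_betwE by blast
  have finj: "u = v" if "u \<in> V4" "v \<in> V4" "f u = f v" for u v
    using gf that by metis
  show ?thesis unfolding kequiv_def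
  proof (intro exI[of _ g] exI[of _ s] conjI)
    show "bij_betw g V4 V4" by (rule gb)
    show "\<forall>u\<in>V4. \<forall>v\<in>V4. g (vadd u v) = vadd (g u) (g v)"
    proof (intro ballI)
      fix u v assume uv: "u \<in> V4" "v \<in> V4"
      have "f (vadd (g u) (g v)) = vadd u v" using f(2) gV uv fg by simp
      then have "g (f (vadd (g u) (g v))) = g (vadd u v)" by simp
      then show "g (vadd u v) = vadd (g u) (g v)" using gf[OF vadd_V4[OF gV[OF uv(1)] gV[OF uv(2)]]] by simp
    qed
    show "\<forall>c. \<forall>v\<in>V4. g (vscale c v) = vscale c (g v)"
    proof (intro allI ballI)
      fix c v assume v: "v \<in> V4"
      have "f (vscale c (g v)) = vscale c v" using f(3) gV v fg by simp
      then have "g (f (vscale c (g v))) = g (vscale c v)" by simp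
      then show "g (vscale c v) = vscale c (g v)" using gf[OF vscale_V4[OF gV[OF v]]] by simp
    qed
    show "\<forall>r. \<forall>w\<in>V4. vec_hom (fst M2) r w \<longrightarrow> vec_hom (fst M1) (r + s) (g w)"
    proof (intro allI ballI impI)
      fix r w assume w: "w \<in> V4" and hw: "vec_hom (fst M2) r w"
      define v where "v = g w"
      have v: "v \<in> V4" using gV w v_def by simp
      define va where "va = (\<lambda>j. sf_part (r + s + fst M1 j) (v j))"
      define vb where "vb = (\<lambda>j. sf_part (Suc (r + s + fst M1 j)) (v j))"
      have vaV: "va \<in> V4" using v by (simp add: V4_def va_def sf_part_def sf_zero_def)
      have vbV: "vb \<in> V4" using v by (simp add: V4_def vb_def sf_part_def sf_zero_def)
      have vsum: "v = vadd va vb" by (rule ext) (simp add: vadd_def va_def vb_def parts_add)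
      have ha: "vec_hom (fst M1) (r + s) va" by (simp add: vec_hom_def va_def hom_part)
      have hb: "vec_hom (fst M1) (Suc (r + s)) vb"
        by (simp add: vec_hom_def vb_def hom_part[of "Suc _", simplified])
      have hfa: "vec_hom (fst M2) (r + s + s) (f va)" using f(4) ha vaV by blast
      have hfb: "vec_hom (fst M2) (Suc (r + s) + s) (f vb)" using f(4) hb vbV by blast
      have "w = f v" using fg w v_def by simp
      also have "f v = vadd (f va) (f vb)" using f(2) vaV vbV vsum by simp
      finally have fsum: "w = vadd (f va) (f vb)" .
      have "f vb = zvec"
      proof (rule ext)
        fix j
        have a1: "sf_hom (r + fst M2 j) (f va j)"
          by (rule hom_shift[OF hfa[unfolded vec_hom_def, rule_format, of j]]) (cases "even r"; cases "even s"; simp add: even_add)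
        have "w j = sf_add (f va j) (f vb j)" using fsum by (simp add: vadd_def)
        then have a2: "sf_hom (r + fst M2 j) (sf_add (f va j) (f vb j))"
          using hw unfolding vec_hom_def by metis
        have a3: "sf_hom (r + fst M2 j) (f vb j)" using hom_add_cancel[OF a2 a1] .
        have a4: "sf_hom (Suc (r + fst M2 j)) (f vb j)"
          by (rule hom_shift[OF hfb[unfolded vec_hom_def, rule_format, of j]]) (cases "even r"; cases "even s"; simp add: even_add)
        show "f vb j = zvec j" using hom_parts[OF a3 a4] by (simp add: zvec_def)
      qed
      moreover have "f zvec = zvec"
      proof -
        have "f (vscale 0 zvec) = vscale 0 (f zvec)" using f(3) zvec_V4 by blast
        then show ?thesis using vscale0[OF zvec_V4] vscale0[OF fV[OF zvec_V4]] by simp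
      qed
      ultimately have "vb = zvec" using finj[OF vbV zvec_V4] by simp
      then have "v = va" using vsum by (auto simp: vadd_def zvec_def sf_add_def sf_zero_def)
      then show "vec_hom (fst M1) (r + s) (g w)" using ha v_def by simp
    qed
    show "\<forall>F. \<forall>w\<in>V4. g (snd M2 F w) = snd M1 F (g w)"
    proof (intro allI ballI)
      fix F w assume w: "w \<in> V4"
      have "f (snd M1 F (g w)) = snd M2 F (f (g w))" using f(5) gV[OF w] by blast
      then have "f (snd M1 F (g w)) = snd M2 F w" using fg[OF w] by simp
      then have "g (f (snd M1 F (g w))) = g (snd M2 F w)" by simp
      then show "g (snd M2 F w) = snd M1 F (g w)" using gf[OF cl[OF gV[OF w]]] by simp
    qed
  qed
qed

lemma Mact_V4: "Mact n A B C X F v \<in> V4" by (simp add: V4_def Mact_def)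

definition v0 :: vec where "v0 = (\<lambda>j. if j = 0 then (1, 0) else sf_zero)"
lemma v0_V4: "v0 \<in> V4" by (simp add: V4_def v0_def)

definition Rel :: "complex \<Rightarrow> (sf \<Rightarrow> vec \<Rightarrow> vec) \<Rightarrow> vec \<Rightarrow> vec" where
  "Rel n act v = vadd (vscale (2*n*(2*n+1)) (act ([:0,0,0,1:], 0) v))
                      (vscale (-3*n) (act ([:0,0,1:], 0) (act ([:0,0,1:], 0) v)))"

lemma c_F1: "Mact n 0 0 0 b (1, 0) v0 = zvec"
  by (rule ext) (simp add: Mact_def v0_def zvec_def sfdefs)

lemma c_Fx: "Mact n 0 0 0 b ([:0,1:], 0) v0 = vscale n v0"
  by (rule ext) (simp add: Mact_def v0_def zvec_def vscale_def sfdefs pderiv_pCons)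

lemma c_rel0: "Rel n (Mact n 0 0 0 0) (vscale k v0) = zvec"
  by (rule ext) (simp add: Rel_def Mact_def v0_def zvec_def vscale_def vadd_def sfdefs pderiv_pCons
      algebra_simps)

lemma c_rel1: "n \<noteq> 0 \<Longrightarrow> 2*n+1 \<noteq> 0 \<Longrightarrow> Rel n (Mact n 0 0 0 1) v0 \<noteq> zvec"
proof
  assume a: "n \<noteq> 0" "2*n+1 \<noteq> 0" and r: "Rel n (Mact n 0 0 0 1) v0 = zvec"
  have "snd (Rel n (Mact n 0 0 0 1) v0 3) = [:12*n*(2*n+1):]"
    by (simp add: Rel_def Mact_def v0_def vscale_def vadd_def sfdefs pderiv_pCons algebra_simps)
  then show False using r a by (simp add: zvec_def sf_zero_def)
qed

lemma Mact0_comp: "j < 4 \<Longrightarrow> Mact n 0 0 0 0 F v j = Ldens (n + of_nat j / 2) F (v j)"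
proof -
  assume "j < 4"
  then consider "j = 0" | "j = 1" | "j = 2" | "j = 3" by linarith
  then show ?thesis
    by cases (simp_all add: Mact_def sfdefs prod_eq_iff)
qed

lemma Ld1: "Ldens nu (1, 0) G = (pderiv (fst G), pderiv (snd G))"
  by (simp add: sfdefs)
lemma Ldx: "Ldens nu ([:0,1:], 0) G = ([:0,1:] * pderiv (fst G) + smult nu (fst G),
     [:0,1:] * pderiv (snd G) + smult (nu + 1/2) (snd G))"
  by (simp add: sfdefs pderiv_pCons prod_eq_iff algebra_simps smult_add_left)

lemma w_char:
  assumes w: "w \<in> V4" and h1: "Mact n 0 0 0 0 (1,0) w = zvec"
    and hx: "Mact n 0 0 0 0 ([:0,1:],0) w = vscale n w"
  shows "\<exists>k. w = vscale k v0"
proof -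
  have d: "pderiv (fst (w j)) = 0 \<and> pderiv (snd (w j)) = 0" if "j < 4" for j
    using fun_cong[OF h1, of j] that by (simp add: Mact0_comp Ld1 zvec_def sf_zero_def)
  have e: "smult (n + of_nat j / 2) (fst (w j)) = smult n (fst (w j)) \<and>
           smult (n + of_nat j / 2 + 1/2) (snd (w j)) = smult n (snd (w j))" if "j < 4" for j
    using fun_cong[OF hx, of j] that d[OF that] by (simp add: Mact0_comp Ldx vscale_def sf_scale_def)
  have snd0: "snd (w j) = 0" if "j < 4" for j
  proof -
    have "smult (of_nat j / 2 + 1/2) (snd (w j)) = 0"
      using e[OF that] by (simp add: algebra_simps smult_add_left)
    moreover have "of_nat j / 2 + 1/2 \<noteq> (0::complex)"
    proof
      assume "of_nat j / 2 + 1/2 = (0::complex)"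
      then have "(of_nat (Suc j) :: complex) = 0" by (simp add: field_simps)
      then show False by (simp only: of_nat_eq_0_iff)
    qed
    ultimately show ?thesis by simp
  qed
  have fst0: "fst (w j) = 0" if "j < 4" "j \<noteq> 0" for j
  proof -
    have "smult (of_nat j / 2) (fst (w j)) = 0"
      using e[OF that(1)] by (simp add: algebra_simps smult_add_left)
    moreover have "of_nat j / 2 \<noteq> (0::complex)" using that(2) by simp
    ultimately show ?thesis by simp
  qed
  obtain k where k: "fst (w 0) = [:k:]" using d[of 0] pderiv_iszero by auto
  have "w = vscale k v0"
  proof (rule ext)
    fix j
    show "w j = vscale k v0 j"
    proof (cases "j < 4")
      case True
      show ?thesis
      proof (cases "j = 0")
        case True then show ?thesis using k snd0[of 0]
          by (simp add: vscale_def v0_def sf_scale_def prod_eq_iff)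
      next
        case False then show ?thesis using fst0[OF \<open>j<4\<close> False] snd0[OF \<open>j<4\<close>]
          by (simp add: vscale_def v0_def sf_scale_def sf_zero_def prod_eq_iff)
      qed
    next
      case False then show ?thesis using w
        by (simp add: V4_def vscale_def v0_def sf_scale_def sf_zero_def)
    qed
  qed
  then show ?thesis ..
qed

lemma nonequiv:
  assumes n: "n \<noteq> 0" "2*n+1 \<noteq> 0"
  shows "\<not> kequiv (e, Mact n 0 0 0 1) (e', Mact n 0 0 0 0)"
proof
  assume "kequiv (e, Mact n 0 0 0 1) (e', Mact n 0 0 0 0)"
  then obtain f s where f: "bij_betw f V4 V4"
       "\<forall>u\<in>V4. \<forall>v\<in>V4. f (vadd u v) = vadd (f u) (f v)"
       "\<forall>c. \<forall>v\<in>V4. f (vscale c v) = vscale c (f v)"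
       "\<forall>F. \<forall>v\<in>V4. f (Mact n 0 0 0 1 F v) = Mact n 0 0 0 0 F (f v)"
    unfolding kequiv_def by auto
  have fV: "f v \<in> V4" if "v \<in> V4" for v using f(1) that bij_betwE by blast
  have finj: "inj_on f V4" using f(1) bij_betw_def by blast
  have fz: "f zvec = zvec"
  proof -
    have "f (vscale 0 zvec) = vscale 0 (f zvec)" using f(3) zvec_V4 by blast
    then show ?thesis using vscale0[OF zvec_V4] vscale0[OF fV[OF zvec_V4]] by simp
  qed
  define w where "w = f v0"
  have wV: "w \<in> V4" using fV v0_V4 w_def by simp
  have h1: "Mact n 0 0 0 0 (1,0) w = zvec"
    using f(4) v0_V4 c_F1[of n 1] fz w_def by metis
  have hx: "Mact n 0 0 0 0 ([:0,1:],0) w = vscale n w"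
    using f(4) f(3) v0_V4 c_Fx[of n 1] w_def by metis
  obtain k where k: "w = vscale k v0" using w_char[OF wV h1 hx] by blast
  let ?a = "Mact n 0 0 0 1" and ?b = "Mact n 0 0 0 0"
  let ?F3 = "([:0,0,0,1:], 0) :: sf" and ?F2 = "([:0,0,1:], 0) :: sf"
  have "f (Rel n ?a v0) = vadd (f (vscale (2*n*(2*n+1)) (?a ?F3 v0)))
                        (f (vscale (-3*n) (?a ?F2 (?a ?F2 v0))))"
    unfolding Rel_def using f(2) by (simp add: vscale_V4 Mact_V4)
  also have "\<dots> = vadd (vscale (2*n*(2*n+1)) (f (?a ?F3 v0)))
                        (vscale (-3*n) (f (?a ?F2 (?a ?F2 v0))))"
    using f(3) by (simp add: Mact_V4)
  also have "\<dots> = vadd (vscale (2*n*(2*n+1)) (?b ?F3 w))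
                        (vscale (-3*n) (?b ?F2 (?b ?F2 w)))"
    using f(4) v0_V4 Mact_V4 w_def by simp
  also have "\<dots> = Rel n ?b w" by (simp add: Rel_def)
  also have "\<dots> = zvec" using k c_rel0 by simp
  finally have "f (Rel n ?a v0) = f zvec" using fz by simp
  moreover have "Rel n ?a v0 \<in> V4" by (simp add: Rel_def vadd_V4 vscale_V4 Mact_V4)
  ultimately have "Rel n ?a v0 = zvec" using finj zvec_V4 inj_onD by metis
  then show False using c_rel1[OF n] by simp
qed

lemma NF_equiv:
  assumes n: "n \<noteq> 0" "2*n+1 \<noteq> 0" "n+1 \<noteq> 0" and e: "\<And>j. e j = (p + j) mod 2"
  shows "kequiv (e, Mact n 0 0 0 (X - 4*A*B*C/(2*n+1))) (e, Mact n A B C X)"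
proof -
  define a where "a = A/n"
  define b where "b = 2*B/(2*n+1)"
  define c where "c = C/(n+1)"
  have ea: "n*a = A" using n by (simp add: a_def)
  have n4: "2 + n*4 \<noteq> 0"
  proof
    assume "2 + n*4 = 0" then have "2*(2*n+1) = 0" by (simp add: algebra_simps)
    then show False using n(2) by (simp only: mult_eq_0_iff) simp
  qed
  have eb: "(n+1/2)*b = B" using n n4 by (simp add: b_def field_simps)
  have ec: "(n+1)*c = C" using n by (simp add: c_def)
  have "2*n*(n+1)*a*b*c = 2*(n*a)*((n+1)*c)*b" by (simp add: algebra_simps)
  also have "\<dots> = 2*A*C*(2*B/(2*n+1))" using ea ec b_def by simp
  also have "\<dots> = 4*A*B*C/(2*n+1)" by simp
  finally have eX: "X - 2*n*(n+1)*a*b*c = X - 4*A*B*C/(2*n+1)" by simp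
  show ?thesis unfolding kequiv_def
  proof (intro exI[of _ "Phi n a b c"] exI[of _ 0] conjI)
    show "bij_betw (Phi n a b c) V4 V4" by (rule Phi_bij)
    show "\<forall>u\<in>V4. \<forall>v\<in>V4. Phi n a b c (vadd u v) = vadd (Phi n a b c u) (Phi n a b c v)"
      by (simp add: Phi_add)
    show "\<forall>t. \<forall>v\<in>V4. Phi n a b c (vscale t v) = vscale t (Phi n a b c v)"
      by (simp add: Phi_scale)
    show "\<forall>r. \<forall>v\<in>V4. vec_hom (fst (e, Mact n 0 0 0 (X - 4*A*B*C/(2*n+1)))) r v \<longrightarrow>
            vec_hom (fst (e, Mact n A B C X)) (r + 0) (Phi n a b c v)"
      using Phi_hom[OF e] by simp
    show "\<forall>F. \<forall>v\<in>V4. Phi n a b c (snd (e, Mact n 0 0 0 (X - 4*A*B*C/(2*n+1))) F v) =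
            snd (e, Mact n A B C X) F (Phi n a b c v)"
    proof (intro allI ballI)
      fix F v
      show "Phi n a b c (snd (e, Mact n 0 0 0 (X - 4*A*B*C/(2*n+1))) F v) =
            snd (e, Mact n A B C X) F (Phi n a b c v)"
        using Phi_inter[of n a b c X F v] unfolding ea eb ec eX by (simp add: fun_eq_iff)
    qed
  qed
qed

definition Sc :: "complex \<Rightarrow> vec \<Rightarrow> vec" where
  "Sc t v = (\<lambda>j. if j = 0 then sf_scale t (v 0) else v j)"

lemma Sc_V4: "v \<in> V4 \<Longrightarrow> Sc t v \<in> V4" by (simp add: V4_def Sc_def)
lemma Sc_Sc: "t \<noteq> 0 \<Longrightarrow> Sc (1/t) (Sc t v) = v"
  by (rule ext) (simp add: Sc_def sf_scale_def)

lemma Sc_Sc': "t \<noteq> 0 \<Longrightarrow> Sc t (Sc (1/t) v) = v"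
  by (rule ext) (simp add: Sc_def sf_scale_def)

lemma scale_equiv:
  assumes "t \<noteq> 0"
  shows "kequiv (e, Mact n 0 0 0 t) (e, Mact n 0 0 0 1)"
  unfolding kequiv_def
proof (intro exI[of _ "Sc t"] exI[of _ 0] conjI)
  show "bij_betw (Sc t) V4 V4"
    by (rule bij_betw_byWitness[where f'="Sc (1/t)"])
       (use assms in \<open>auto simp: Sc_Sc Sc_Sc' Sc_V4\<close>)
  show "\<forall>u\<in>V4. \<forall>v\<in>V4. Sc t (vadd u v) = vadd (Sc t u) (Sc t v)"
    by (simp add: Sc_def vadd_def fun_eq_iff sfdefs smult_add_right)
  show "\<forall>c. \<forall>v\<in>V4. Sc t (vscale c v) = vscale c (Sc t v)"
    by (simp add: Sc_def vscale_def fun_eq_iff sfdefs mult.commute)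
  show "\<forall>r. \<forall>v\<in>V4. vec_hom (fst (e, Mact n 0 0 0 t)) r v \<longrightarrow> vec_hom (fst (e, Mact n 0 0 0 1)) (r + 0) (Sc t v)"
    by (auto simp: vec_hom_def Sc_def sf_hom_def sf_scale_def split: if_splits)
  show "\<forall>F. \<forall>v\<in>V4. Sc t (snd (e, Mact n 0 0 0 t) F v) = snd (e, Mact n 0 0 0 1) F (Sc t v)"
  proof (intro allI ballI)
    fix F v
    show "Sc t (snd (e, Mact n 0 0 0 t) F v) = snd (e, Mact n 0 0 0 1) F (Sc t v)"
      by (rule ext) (simp add: Sc_def Mact_def sfdefs prod_eq_iff pexp poly_eq_poly_eq_iff[symmetric] fun_eq_iff field_simps)
  qed
qed

lemma kequiv_refl: "kequiv M M"
  unfolding kequiv_def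
  by (intro exI[of _ id] exI[of _ 0]) (simp add: bij_betw_id)

lemma swap_equiv: "kequiv ((\<lambda>j. j mod 2), act) ((\<lambda>j. (1 + j) mod 2), act)"
  unfolding kequiv_def
proof (intro exI[of _ id] exI[of _ 1] conjI)
  show "\<forall>r. \<forall>v\<in>V4. vec_hom (fst ((\<lambda>j. j mod 2), act)) r v \<longrightarrow>
          vec_hom (fst ((\<lambda>j. (1 + j) mod 2), act)) (r + 1) (id v)"
  proof (intro allI ballI impI)
    fix r v assume "vec_hom (fst ((\<lambda>j. j mod 2), act)) r v"
    then have h: "sf_hom (r + j mod 2) (v j)" for j by (simp add: vec_hom_def)
    show "vec_hom (fst ((\<lambda>j. (1 + j) mod 2), act)) (r + 1) (id v)"
      unfolding vec_hom_def
    proof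
      fix j show "sf_hom (r + 1 + fst ((\<lambda>j. (1 + j) mod 2), act) j) (id v j)"
        unfolding fst_conv id_apply
        by (rule hom_shift[OF h[of j]]) (cases "even r"; cases "even j"; simp add: even_add)
    qed
  qed
qed (simp_all add: bij_betw_id)

lemma swap_equiv': "kequiv ((\<lambda>j. (1 + j) mod 2), act) ((\<lambda>j. j mod 2), act)"
  unfolding kequiv_def
proof (intro exI[of _ id] exI[of _ 1] conjI)
  show "\<forall>r. \<forall>v\<in>V4. vec_hom (fst ((\<lambda>j. (1 + j) mod 2), act)) r v \<longrightarrow>
          vec_hom (fst ((\<lambda>j. j mod 2), act)) (r + 1) (id v)"
  proof (intro allI ballI impI)
    fix r v assume "vec_hom (fst ((\<lambda>j. (1 + j) mod 2), act)) r v"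
    then have h: "sf_hom (r + (1 + j) mod 2) (v j)" for j by (simp add: vec_hom_def)
    show "vec_hom (fst ((\<lambda>j. j mod 2), act)) (r + 1) (id v)"
      unfolding vec_hom_def
    proof
      fix j show "sf_hom (r + 1 + fst ((\<lambda>j. j mod 2), act) j) (id v j)"
        unfolding fst_conv id_apply
        by (rule hom_shift[OF h[of j]]) (cases "even r"; cases "even j"; simp add: even_add)
    qed
  qed
qed (simp_all add: bij_betw_id)

lemma Dsum_eq: "Dsum4 (\<lambda>j. n + of_nat j / 2) e = (e, Mact n 0 0 0 0)"
  unfolding Dsum4_def
  by (simp add: fun_eq_iff Mact0_comp) (simp add: Mact_def)

lemma SQact_high: "j \<ge> 4 \<Longrightarrow> SQact lam mu k p F T j = sf_zero"
  by (simp add: SQact_def SQraw_def Let_def vadd_def sfdefs)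

lemma SQ4_0: "SQ4 lam mu (mu-lam-n) 0 = ((\<lambda>j. j mod 2), Mact n ((mu-lam-n)/2) (-(n+1-mu-lam)/2) ((mu-lam-n-1)/2)
           (-(mu-lam-n)*(mu-lam-n-1)/4))" (is "_ = (_, Mact n ?A ?B ?C ?X)")
proof -
  have "SQact lam mu (mu-lam-n) 0 F T j = Mact n ?A ?B ?C ?X F T j" for F T j
  proof (cases "j < 4")
    case True then show ?thesis by (rule SQ0_comp)
  next
    case False then show ?thesis by (simp add: SQact_high Mact_def)
  qed
  then have eq: "SQact lam mu (mu-lam-n) 0 = Mact n ?A ?B ?C ?X" by (intro ext)
  show ?thesis unfolding SQ4_def eq by simp
qed

lemma SQ4_1: "SQ4 lam mu (mu-lam-n) 1 = ((\<lambda>j. (1 + j) mod 2), Mact n ((mu+lam-n-1/2)/2) ((mu-lam-n-1/2)/2) ((mu+lam-n-3/2)/2)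
           (-3/16 - n/2 - n^2/4 + mu/2 + mu*n/2 - mu^2/4 + lam*n/2 - lam*mu/2 + 3*lam^2/4))" (is "_ = (_, Mact n ?A ?B ?C ?X)")
proof -
  have "SQact lam mu (mu-lam-n) 1 F T j = Mact n ?A ?B ?C ?X F T j" for F T j
  proof (cases "j < 4")
    case True then show ?thesis by (rule SQ1_comp)
  next
    case False then show ?thesis by (simp add: SQact_high Mact_def)
  qed
  then have eq: "SQact lam mu (mu-lam-n) 1 = Mact n ?A ?B ?C ?X" by (intro ext)
  show ?thesis unfolding SQ4_def eq by simp
qed

lemma sq3: "(complex_of_real (sqrt 3))^2 = 3"
  by (simp flip: of_real_power)

lemma gamma_eq: "gamma lam mu = 3*(lam+mu-1/2)^2"
  by (simp add: gamma_def gamma_half_def power_mult_distrib sq3)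

lemma beta_lin: "2*n+1 \<noteq> (0::complex) \<Longrightarrow> (2*n+1)*(X - 4*A*B*C/(2*n+1)) = (2*n+1)*X - 4*A*B*C"
  by (simp add: right_diff_distrib)

lemma beta_zero: "2*n+1 \<noteq> (0::complex) \<Longrightarrow> (X - 4*A*B*C/(2*n+1) = 0) \<longleftrightarrow> ((2*n+1)*X - 4*A*B*C = 0)"
  by (metis beta_lin mult_eq_0_iff)

lemma beta_iff_gen:
  assumes "2*n+1 \<noteq> (0::complex)" "f = c * ((2*n+1)*X - 4*A*B*C)" "c \<noteq> 0"
  shows "(X - 4*A*B*C/(2*n+1) = 0) \<longleftrightarrow> f = 0"
  by (simp only: beta_zero[OF assms(1)] assms(2) mult_eq_0_iff) (simp add: assms(3))

lemma beta0_iff: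
  assumes "2*n+1 \<noteq> (0::complex)"
  shows "(-(mu-lam-n)*(mu-lam-n-1)/4 - 4*((mu-lam-n)/2)*(-(n+1-mu-lam)/2)*((mu-lam-n-1)/2)/(2*n+1) = 0)
         \<longleftrightarrow> f0 n lam mu = 0"
proof (rule beta_iff_gen[OF assms])
  show "f0 n lam mu = (-2*complex_of_real (sqrt 3)) *
     ((2*n+1)*(-(mu-lam-n)*(mu-lam-n-1)/4) - 4*((mu-lam-n)/2)*(-(n+1-mu-lam)/2)*((mu-lam-n-1)/2))"
    by (simp add: f0_def N4_def gamma_half_def Let_def field_simps)
qed simp

lemma beta1_iff:
  assumes "2*n+1 \<noteq> (0::complex)"
  shows "((-3/16 - n/2 - n^2/4 + mu/2 + mu*n/2 - mu^2/4 + lam*n/2 - lam*mu/2 + 3*lam^2/4)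
          - 4*((mu+lam-n-1/2)/2)*((mu-lam-n-1/2)/2)*((mu+lam-n-3/2)/2)/(2*n+1) = 0)
         \<longleftrightarrow> f1 n lam mu = 0"
proof (rule beta_iff_gen[OF assms])
  show "f1 n lam mu = (-6) *
     ((2*n+1)*(-3/16 - n/2 - n^2/4 + mu/2 + mu*n/2 - mu^2/4 + lam*n/2 - lam*mu/2 + 3*lam^2/4)
          - 4*((mu+lam-n-1/2)/2)*((mu-lam-n-1/2)/2)*((mu+lam-n-3/2)/2))"
    by (simp add: f1_def N4_def gamma_eq Let_def field_simps power2_eq_square)
qed simp

definition E0 :: "nat \<Rightarrow> nat" where "E0 = (\<lambda>j. j mod 2)"
definition E1 :: "nat \<Rightarrow> nat" where "E1 = (\<lambda>j. (1 + j) mod 2)"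

lemma Mact_cl: "v \<in> V4 \<Longrightarrow> snd (e, Mact n A B C X) F v \<in> V4" by (simp add: Mact_V4)

lemma to_tgt:
  assumes "e = E0 \<or> e = E1"
  shows "kequiv (e, Mact n 0 0 0 t) (E0, Mact n 0 0 0 (if t = 0 then 0 else 1)) \<and>
         kequiv (E0, Mact n 0 0 0 (if t = 0 then 0 else 1)) (e, Mact n 0 0 0 t)"
proof -
  have a: "kequiv (E0, Mact n 0 0 0 t) (E0, Mact n 0 0 0 (if t = 0 then 0 else 1)) \<and>
         kequiv (E0, Mact n 0 0 0 (if t = 0 then 0 else 1)) (E0, Mact n 0 0 0 t)"
  proof (cases "t = 0")
    case True then show ?thesis by (simp add: kequiv_refl)
  next
    case False
    have "kequiv (E0, Mact n 0 0 0 t) (E0, Mact n 0 0 0 1)" by (rule scale_equiv[OF False])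
    moreover then have "kequiv (E0, Mact n 0 0 0 1) (E0, Mact n 0 0 0 t)"
      by (rule kequiv_sym) (rule Mact_cl)
    ultimately show ?thesis using False by simp
  qed
  show ?thesis
  proof (cases "e = E0")
    case True then show ?thesis using a by simp
  next
    case False then have e: "e = E1" using assms by simp
    have s1: "kequiv (E1, Mact n 0 0 0 t) (E0, Mact n 0 0 0 t)"
      unfolding E0_def E1_def by (rule swap_equiv')
    have s2: "kequiv (E0, Mact n 0 0 0 t) (E1, Mact n 0 0 0 t)"
      unfolding E0_def E1_def by (rule swap_equiv)
    show ?thesis using e a kequiv_trans[OF s1] kequiv_trans[OF _ s2] by blast
  qed
qed

lemma classify:
  assumes n: "n \<noteq> 0" "2*n+1 \<noteq> 0"
    and M1: "kequiv M (e, Mact n 0 0 0 t)" and M2: "kequiv (e, Mact n 0 0 0 t) M"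
    and N1: "kequiv M' (e', Mact n 0 0 0 t')" and N2: "kequiv (e', Mact n 0 0 0 t') M'"
    and e: "e = E0 \<or> e = E1" and e': "e' = E0 \<or> e' = E1"
  shows "kequiv M M' \<longleftrightarrow> (t = 0 \<longleftrightarrow> t' = 0)"
proof -
  let ?T = "\<lambda>t::complex. (E0, Mact n 0 0 0 (if t = 0 then 0 else 1))"
  have A1: "kequiv M (?T t)" using kequiv_trans[OF M1] to_tgt[OF e] by blast
  have A2: "kequiv (?T t) M" using kequiv_trans[OF _ M2] to_tgt[OF e] by blast
  have B1: "kequiv M' (?T t')" using kequiv_trans[OF N1] to_tgt[OF e'] by blast
  have B2: "kequiv (?T t') M'" using kequiv_trans[OF _ N2] to_tgt[OF e'] by blast
  have ne: "\<not> kequiv (E0, Mact n 0 0 0 1) (E0, Mact n 0 0 0 0)" by (rule nonequiv[OF n])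
  have ne2: "\<not> kequiv (E0, Mact n 0 0 0 0) (E0, Mact n 0 0 0 1)"
  proof
    assume "kequiv (E0, Mact n 0 0 0 0) (E0, Mact n 0 0 0 1)"
    then have "kequiv (E0, Mact n 0 0 0 1) (E0, Mact n 0 0 0 0)"
      by (rule kequiv_sym) (rule Mact_cl)
    then show False using ne by simp
  qed
  show ?thesis
  proof
    assume k: "kequiv M M'"
    have "kequiv (?T t) (?T t')" using kequiv_trans[OF kequiv_trans[OF A2 k] B1] .
    then show "t = 0 \<longleftrightarrow> t' = 0" using ne ne2 by (auto split: if_splits)
  next
    assume "t = 0 \<longleftrightarrow> t' = 0"
    then have "?T t = ?T t'" by simp
    then show "kequiv M M'" using kequiv_trans[OF A1] B2 by simp
  qed
qed

lemma SQ0_nf: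
  fixes lam mu n :: complex
  assumes n: "n \<noteq> 0" "2*n+1 \<noteq> 0" "n+1 \<noteq> 0"
  defines "t \<equiv> -(mu-lam-n)*(mu-lam-n-1)/4 - 4*((mu-lam-n)/2)*(-(n+1-mu-lam)/2)*((mu-lam-n-1)/2)/(2*n+1)"
  shows "kequiv (SQ4 lam mu (mu-lam-n) 0) (E0, Mact n 0 0 0 t) \<and> kequiv (E0, Mact n 0 0 0 t) (SQ4 lam mu (mu-lam-n) 0)"
proof -
  have k: "kequiv (E0, Mact n 0 0 0 t) (SQ4 lam mu (mu-lam-n) 0)"
    unfolding SQ4_0 t_def E0_def by (rule NF_equiv[OF n, of _ 0]) simp
  moreover have "kequiv (SQ4 lam mu (mu-lam-n) 0) (E0, Mact n 0 0 0 t)"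
    using k by (rule kequiv_sym) (rule Mact_cl)
  ultimately show ?thesis by simp
qed

lemma SQ1_nf:
  fixes lam mu n :: complex
  assumes n: "n \<noteq> 0" "2*n+1 \<noteq> 0" "n+1 \<noteq> 0"
  defines "t \<equiv> (-3/16 - n/2 - n^2/4 + mu/2 + mu*n/2 - mu^2/4 + lam*n/2 - lam*mu/2 + 3*lam^2/4)
          - 4*((mu+lam-n-1/2)/2)*((mu-lam-n-1/2)/2)*((mu+lam-n-3/2)/2)/(2*n+1)"
  shows "kequiv (SQ4 lam mu (mu-lam-n) 1) (E1, Mact n 0 0 0 t) \<and> kequiv (E1, Mact n 0 0 0 t) (SQ4 lam mu (mu-lam-n) 1)"
proof -
  have k: "kequiv (E1, Mact n 0 0 0 t) (SQ4 lam mu (mu-lam-n) 1)"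
    unfolding SQ4_1 t_def E1_def by (rule NF_equiv[OF n, of _ 1]) simp
  moreover have "kequiv (SQ4 lam mu (mu-lam-n) 1) (E1, Mact n 0 0 0 t)"
    using k by (rule kequiv_sym) (rule Mact_cl)
  ultimately show ?thesis by simp
qed

lemma Dsum0: "Dsum4 (\<lambda>j. n + of_nat j / 2) (\<lambda>j. j mod 2) = (E0, Mact n 0 0 0 0)"
  unfolding E0_def by (rule Dsum_eq)
lemma Dsum1: "Dsum4 (\<lambda>j. n + of_nat j / 2) (\<lambda>j. (j + 1) mod 2) = (E1, Mact n 0 0 0 0)"
  unfolding E1_def using Dsum_eq[of n "\<lambda>j. (1 + j) mod 2"] by (simp add: add.commute)

theorem proposition4p1:
  fixes n lam mu lam' mu' :: complex
  assumes "n \<noteq> 0" and "n \<noteq> -1/2" and "n \<noteq> -1"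
  shows
    "(kequiv (SQ4 lam mu (mu - lam - n) 0) (SQ4 lam' mu' (mu' - lam' - n) 0)
        \<longleftrightarrow> (f0 n lam mu = 0 \<longleftrightarrow> f0 n lam' mu' = 0))
     \<and> (kequiv (SQ4 lam mu (mu - lam - n) 0) (Dsum4 (\<lambda>j. n + of_nat j / 2) (\<lambda>j. j mod 2))
        \<longleftrightarrow> f0 n lam mu = 0)
     \<and> (kequiv (SQ4 lam mu (mu - lam - n) 1) (SQ4 lam' mu' (mu' - lam' - n) 1)
        \<longleftrightarrow> (f1 n lam mu = 0 \<longleftrightarrow> f1 n lam' mu' = 0))
     \<and> (kequiv (SQ4 lam mu (mu - lam - n) 1) (Dsum4 (\<lambda>j. n + of_nat j / 2) (\<lambda>j. (j + 1) mod 2))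
        \<longleftrightarrow> f1 n lam mu = 0)
     \<and> (kequiv (SQ4 lam mu (mu - lam - n) 0) (SQ4 lam' mu' (mu' - lam' - n) 1)
        \<longleftrightarrow> (f0 n lam mu = 0 \<longleftrightarrow> f1 n lam' mu' = 0))"
proof -
  have n: "n \<noteq> 0" "2*n+1 \<noteq> 0" "n+1 \<noteq> 0"
  proof -
    show "n \<noteq> 0" by (rule assms(1))
    show "2*n+1 \<noteq> 0"
    proof
      assume "2*n+1 = 0" then have "n = -1/2" by (simp add: field_simps add_eq_0_iff)
      then show False using assms(2) by simp
    qed
    show "n+1 \<noteq> 0"
    proof
      assume "n+1 = 0" then have "n = -1" by (simp add: eq_neg_iff_add_eq_0)
      then show False using assms(3) by simp
    qed
  qed
  note a0 = SQ0_nf[OF n, of lam mu] and a0' = SQ0_nf[OF n, of lam' mu']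
  note a1 = SQ1_nf[OF n, of lam mu] and a1' = SQ1_nf[OF n, of lam' mu']
  note b0 = beta0_iff[OF n(2), of mu lam] and b0' = beta0_iff[OF n(2), of mu' lam']
  note b1 = beta1_iff[OF n(2), of mu lam] and b1' = beta1_iff[OF n(2), of mu' lam']
  have E: "E0 = E0 \<or> E0 = E1" "E1 = E0 \<or> E1 = E1" by simp_all
  have r0: "kequiv (E0, Mact n 0 0 0 0) (E0, Mact n 0 0 0 0)" by (rule kequiv_refl)
  have r1: "kequiv (E1, Mact n 0 0 0 0) (E1, Mact n 0 0 0 0)" by (rule kequiv_refl)
  have p1: "kequiv (SQ4 lam mu (mu - lam - n) 0) (SQ4 lam' mu' (mu' - lam' - n) 0)
        \<longleftrightarrow> (f0 n lam mu = 0 \<longleftrightarrow> f0 n lam' mu' = 0)"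
    using classify[OF n(1,2) a0[THEN conjunct1] a0[THEN conjunct2] a0'[THEN conjunct1] a0'[THEN conjunct2] E(1) E(1)]
      b0 b0' by simp
  have p2: "kequiv (SQ4 lam mu (mu - lam - n) 0) (Dsum4 (\<lambda>j. n + of_nat j / 2) (\<lambda>j. j mod 2))
        \<longleftrightarrow> f0 n lam mu = 0"
    unfolding Dsum0
    using classify[OF n(1,2) a0[THEN conjunct1] a0[THEN conjunct2] r0 r0 E(1) E(1)] b0 by simp
  have p3: "kequiv (SQ4 lam mu (mu - lam - n) 1) (SQ4 lam' mu' (mu' - lam' - n) 1)
        \<longleftrightarrow> (f1 n lam mu = 0 \<longleftrightarrow> f1 n lam' mu' = 0)"
    using classify[OF n(1,2) a1[THEN conjunct1] a1[THEN conjunct2] a1'[THEN conjunct1] a1'[THEN conjunct2] E(2) E(2)]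
      b1 b1' by simp
  have p4: "kequiv (SQ4 lam mu (mu - lam - n) 1) (Dsum4 (\<lambda>j. n + of_nat j / 2) (\<lambda>j. (j + 1) mod 2))
        \<longleftrightarrow> f1 n lam mu = 0"
    unfolding Dsum1
    using classify[OF n(1,2) a1[THEN conjunct1] a1[THEN conjunct2] r1 r1 E(2) E(2)] b1 by simp
  have p5: "kequiv (SQ4 lam mu (mu - lam - n) 0) (SQ4 lam' mu' (mu' - lam' - n) 1)
        \<longleftrightarrow> (f0 n lam mu = 0 \<longleftrightarrow> f1 n lam' mu' = 0)"
    using classify[OF n(1,2) a0[THEN conjunct1] a0[THEN conjunct2] a1'[THEN conjunct1] a1'[THEN conjunct2] E(1) E(2)]
      b0 b1' by simp
  show ?thesis using p1 p2 p3 p4 p5 by blast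
qed
end
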